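(* Let $\mathsf{Pos}(n)$ be the open cone of $n\times n$ real symmetric positive definite matrices in the space of symmetric matrices. Then $r(\mathsf{Pos}(n))=n$.
   Context: For an open acute convex cone $c$ in a finite-dimensional real vector space, its rank $r(c)$ is the infimum of positive integers $N$ with the property: whenever $v_0,v_1,\dots,v_N\in\overline c-\{0\}$ satisfy $\sum_{i=0}^Nv_i\in c$, there is an index $0\le j\le N$ with $\sum_{0\le i\le N,\,i\ne j}v_i\in c$. Here $\overline{\mathsf{Pos}(n)}$ is the cone of positive semidefinite matrices. *)

theory Defs
  imports "HOL-Analysis.Analysis" "HOL-Library.Extended_Nat"
begin

definition cone_rank_prop :: "'a::real_normed_vector set \<Rightarrow> nat \<Rightarrow> bool" where
  "cone_rank_prop c N \<longleftrightarrow>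
     (\<forall>v :: nat \<Rightarrow> 'a.
        (\<forall>i\<le>N. v i \<in> closure c - {0}) \<longrightarrow> (\<Sum>i\<le>N. v i) \<in> c \<longrightarrow>
        (\<exists>j\<le>N. (\<Sum>i\<in>{..N} - {j}. v i) \<in> c))"

definition cone_rank :: "'a::real_normed_vector set \<Rightarrow> enat" where
  "cone_rank c = (INF N \<in> {N::nat. 0 < N \<and> cone_rank_prop c N}. enat N)"

text \<open>Open cone of real symmetric positive definite matrices; all its elements are symmetric,
so it lives in the subspace of symmetric matrices (which is closed in the matrix space).\<close>
definition Pos :: "(real^'n^'n) set" where
  "Pos = {A. transpose A = A \<and> (\<forall>x::real^'n. x \<noteq> 0 \<longrightarrow> 0 < x \<bullet> (A *v x))}"

end

theory Submission
  imports Defs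
begin

definition PSD :: "(real^'n^'n) set" where
  "PSD = {A. transpose A = A \<and> (\<forall>x::real^'n. 0 \<le> x \<bullet> (A *v x))}"

lemma sym_inner:
  fixes A :: "real^'n^'n"
  assumes "transpose A = A"
  shows "x \<bullet> (A *v y) = (A *v x) \<bullet> y"
proof -
  have "x \<bullet> (A *v y) = (x v* A) \<bullet> y" by (simp add: dot_lmul_matrix)
  also have "x v* A = transpose A *v x" by simp
  finally show ?thesis using assms by simp
qed

lemma real_aux:
  fixes a c :: real
  assumes h: "\<forall>t. 0 \<le> 2 * t * a + t^2 * c" and c0: "0 \<le> c"
  shows "a = 0"
proof -
  define t where "t = - a / (c + 1)"
  have "0 \<le> 2 * t * a + t^2 * c" using h by simp
  hence "0 \<le> (2 * t * a + t^2 * c) * (c+1)^2" using c0 by simp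
  also have "(2 * t * a + t^2 * c) * (c+1)^2 = - (a*a) * (c + 2)"
  proof -
    have tc: "t * (c+1) = - a" using c0 unfolding t_def by (simp add: field_simps)
    have "(2 * t * a + t^2 * c) * (c+1)^2 = 2 * a * (c+1) * (t * (c+1)) + c * (t*(c+1))^2"
      by (simp add: power2_eq_square algebra_simps)
    also have "\<dots> = - (a*a) * (c + 2)" unfolding tc by (simp add: power2_eq_square ring_distribs)
    finally show ?thesis .
  qed
  finally have "(a*a) * (c+2) \<le> 0" by simp
  moreover have "0 \<le> (a*a) * (c+2)" using c0 by simp
  ultimately have "(a*a) * (c+2) = 0" by linarith
  moreover have "c + 2 \<noteq> 0" using c0 by linarith
  ultimately show "a = 0" by simp
qed

lemma psd_kernel:
  fixes A :: "real^'n^'n"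
  assumes "A \<in> PSD" "x \<bullet> (A *v x) = 0"
  shows "A *v x = 0"
proof -
  define z where "z = A *v x"
  define a where "a = z \<bullet> z"
  define c where "c = z \<bullet> (A *v z)"
  have sym: "transpose A = A" and pos: "\<And>y. 0 \<le> y \<bullet> (A *v y)" using assms(1) by (auto simp: PSD_def)
  have c0: "0 \<le> c" unfolding c_def by (rule pos)
  have exp: "(x + t *\<^sub>R z) \<bullet> (A *v (x + t *\<^sub>R z)) = 2 * t * a + t^2 * c" for t
  proof -
    have "x \<bullet> (A *v z) = z \<bullet> (A *v x)" using sym_inner[OF sym, of x z] by (simp add: inner_commute)
    then show ?thesis using assms(2)
      by (simp add: matrix_vector_right_distrib matrix_vector_mult_scaleR inner_add_left inner_add_right
          a_def c_def z_def power2_eq_square algebra_simps)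
  qed
  have "\<forall>t. 0 \<le> 2 * t * a + t^2 * c" using pos exp by metis
  hence "a = 0" using c0 by (rule real_aux)
  thus ?thesis unfolding a_def z_def by simp
qed

lemma closed_PSD: "closed (PSD :: (real^'n^'n) set)"
proof -
  have eqP: "PSD = {A::real^'n^'n. transpose A = A} \<inter> (\<Inter>x. {A. 0 \<le> x \<bullet> (A *v x)})"
    unfolding PSD_def by auto
  have c1: "closed {A::real^'n^'n. transpose A = A}"
  proof -
    have eq: "{A::real^'n^'n. transpose A = A} = (\<Inter>i. \<Inter>j. {A. A$i$j = A$j$i})"
      by (auto simp: vec_eq_iff transpose_def)
    have cl: "closed {A::real^'n^'n. A$i$j = A$j$i}" for i j
      by (intro closed_Collect_eq continuous_intros)
    show ?thesis unfolding eq by (intro closed_INT ballI cl)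
  qed
  have c2: "closed {A::real^'n^'n. 0 \<le> x \<bullet> (A *v x)}" for x :: "real^'n"
  proof -
    have e: "(\<lambda>A::real^'n^'n. x \<bullet> (A *v x)) = (\<lambda>A. \<Sum>i\<in>UNIV. x$i * (\<Sum>j\<in>UNIV. A$i$j * x$j))"
      by (simp add: inner_vec_def matrix_vector_mult_def mult.commute)
    have "continuous_on UNIV (\<lambda>A::real^'n^'n. x \<bullet> (A *v x))"
      unfolding e by (intro continuous_intros)
    thus ?thesis by (intro closed_Collect_le continuous_on_const) auto
  qed
  show ?thesis unfolding eqP by (intro closed_Int c1 closed_INT ballI c2)
qed

lemma Pos_sub_PSD: "Pos \<subseteq> PSD"
proof
  fix A :: "real^'n^'n" assume "A \<in> Pos"
  hence "transpose A = A" "\<And>x. x \<noteq> 0 \<Longrightarrow> 0 < x \<bullet> (A *v x)" by (auto simp: Pos_def)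
  moreover have "0 \<le> x \<bullet> (A *v x)" for x
    using calculation(2)[of x] by (cases "x = 0") auto
  ultimately show "A \<in> PSD" by (auto simp: PSD_def)
qed

lemma closure_Pos_sub: "closure Pos \<subseteq> PSD"
  by (rule closure_minimal[OF Pos_sub_PSD closed_PSD])


lemma transpose_sum: "transpose (sum B I) = (\<Sum>i\<in>I. transpose (B i :: real^'n^'n))"
  by (simp add: vec_eq_iff transpose_def sum_component)

lemma mv_sum: "(sum B I) *v x = (\<Sum>i\<in>I. (B i :: real^'n^'m) *v x)"
  by (simp add: vec_eq_iff matrix_vector_mult_def sum_component sum_distrib_right sum.swap[of _ I])

lemma mv_sum_r: "(A :: real^'n^'m) *v (sum f I) = (\<Sum>i\<in>I. A *v f i)"
  by (simp add: vec_eq_iff matrix_vector_mult_def sum_component sum_distrib_left sum.swap[of _ I])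

lemma qf_sum: "x \<bullet> ((sum B I) *v x) = (\<Sum>i\<in>I. x \<bullet> ((B i :: real^'n^'n) *v x))"
  by (simp add: mv_sum inner_sum_right)

lemma scaleR_mv: "(c *\<^sub>R (B :: real^'n^'m)) *v x = c *\<^sub>R (B *v x)"
  by (simp add: vec_eq_iff matrix_vector_mult_def sum_distrib_left mult.assoc)

lemma PSD_sub_closure: "PSD \<subseteq> closure (Pos :: (real^'n^'n) set)"
proof
  fix A :: "real^'n^'n" assume A: "A \<in> PSD"
  hence sym: "transpose A = A" and pos: "\<And>x. 0 \<le> x \<bullet> (A *v x)" by (auto simp: PSD_def)
  define f where "f = (\<lambda>k. A + inverse (real (Suc k)) *\<^sub>R mat 1)"
  have "f k \<in> Pos" for k
  proof -
    define e where "e = inverse (real (Suc k))"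
    have e0: "e > 0" unfolding e_def by simp
    have "transpose (f k) = f k" unfolding f_def using sym
      by (simp add: vec_eq_iff transpose_def mat_def)
    moreover have "0 < x \<bullet> (f k *v x)" if "x \<noteq> 0" for x
    proof -
      have "f k *v x = A *v x + e *\<^sub>R x" unfolding f_def e_def
        by (simp add: matrix_vector_mult_add_rdistrib scaleR_mv)
      hence "x \<bullet> (f k *v x) = x \<bullet> (A *v x) + e * (x \<bullet> x)" by (simp add: inner_add_right)
      moreover have "0 < x \<bullet> x" using that by simp
      ultimately show ?thesis using pos[of x] e0 by (simp add: add_nonneg_pos)
    qed
    ultimately show ?thesis by (simp add: Pos_def)
  qed
  moreover have "f \<longlonglongrightarrow> A"
  proof -
    have "(\<lambda>k. A + inverse (real (Suc k)) *\<^sub>R mat 1) \<longlonglongrightarrow> A + 0 *\<^sub>R (mat 1 :: real^'n^'n)"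
      by (intro tendsto_add tendsto_const tendsto_scaleR LIMSEQ_inverse_real_of_nat)
    thus ?thesis unfolding f_def by simp
  qed
  ultimately show "A \<in> closure Pos" unfolding closure_sequential by blast
qed


lemma rank_prop_card: "cone_rank_prop (Pos :: (real^'n^'n) set) CARD('n)"
  unfolding cone_rank_prop_def
proof (intro allI impI)
  let ?N = "CARD('n)"
  fix v :: "nat \<Rightarrow> real^'n^'n"
  assume vc: "\<forall>i\<le>?N. v i \<in> closure Pos - {0}" and S: "(\<Sum>i\<le>?N. v i) \<in> Pos"
  have vP: "v i \<in> PSD" if "i \<le> ?N" for i using vc that closure_Pos_sub by blast
  show "\<exists>j\<le>?N. (\<Sum>i\<in>{..?N} - {j}. v i) \<in> Pos"
  proof (rule ccontr)
    assume nj: "\<not> ?thesis"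
    have "\<exists>x. x \<noteq> 0 \<and> x \<bullet> ((\<Sum>i\<in>{..?N} - {j}. v i) *v x) \<le> 0" if j: "j \<le> ?N" for j
    proof -
      have "transpose (\<Sum>i\<in>{..?N} - {j}. v i) = (\<Sum>i\<in>{..?N} - {j}. v i)"
        unfolding transpose_sum using vP by (intro sum.cong) (auto simp: PSD_def)
      moreover have "(\<Sum>i\<in>{..?N} - {j}. v i) \<notin> Pos" using nj j by blast
      ultimately show ?thesis unfolding Pos_def by force
    qed
    then obtain X where X: "\<And>j. j \<le> ?N \<Longrightarrow> X j \<noteq> 0 \<and> X j \<bullet> ((\<Sum>i\<in>{..?N} - {j}. v i) *v X j) \<le> 0"
      by metis
    have ker: "v i *v X j = 0" if "i \<le> ?N" "j \<le> ?N" "i \<noteq> j" for i j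
    proof -
      have "(\<Sum>i\<in>{..?N} - {j}. X j \<bullet> (v i *v X j)) \<le> 0" using X[OF that(2)] by (simp add: qf_sum)
      moreover have nn: "\<forall>i\<in>{..?N} - {j}. 0 \<le> X j \<bullet> (v i *v X j)" using vP by (auto simp: PSD_def)
      ultimately have "(\<Sum>i\<in>{..?N} - {j}. X j \<bullet> (v i *v X j)) = 0"
        by (meson antisym sum_nonneg)
      hence "\<forall>i\<in>{..?N} - {j}. X j \<bullet> (v i *v X j) = 0" using nn sum_nonneg_eq_0_iff[of "{..?N} - {j}" "\<lambda>i. X j \<bullet> (v i *v X j)"] by simp
      hence "X j \<bullet> (v i *v X j) = 0" using that by auto
      thus ?thesis using psd_kernel vP that by blast
    qed
    have nz: "v j *v X j \<noteq> 0" if "j \<le> ?N" for j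
    proof
      assume z: "v j *v X j = 0"
      have "(\<Sum>i\<le>?N. v i) *v X j = (\<Sum>i\<le>?N. v i *v X j)" by (rule mv_sum)
      also have "\<dots> = 0" using ker that z by (intro sum.neutral) (metis atMost_iff)
      finally have "X j \<bullet> ((\<Sum>i\<le>?N. v i) *v X j) = 0" by simp
      moreover have "0 < X j \<bullet> ((\<Sum>i\<le>?N. v i) *v X j)" using S X[OF that] by (auto simp: Pos_def)
      ultimately show False by simp
    qed
    have inj: "inj_on X {..?N}"
    proof (rule inj_onI)
      fix j k assume "j \<in> {..?N}" "k \<in> {..?N}" "X j = X k"
      thus "j = k" using ker nz by (metis atMost_iff)
    qed
    have indep: "independent (X ` {..?N})"
    proof
      assume "dependent (X ` {..?N})"
      then obtain u where u: "\<exists>w\<in>X ` {..?N}. u w \<noteq> 0" "(\<Sum>w\<in>X ` {..?N}. u w *\<^sub>R w) = 0"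
        using dependent_finite[of "X ` {..?N}"] by auto
      then obtain k where k: "k \<le> ?N" "u (X k) \<noteq> 0" by auto
      have "0 = v k *v (\<Sum>w\<in>X ` {..?N}. u w *\<^sub>R w)" using u(2) by simp
      also have "\<dots> = (\<Sum>w\<in>X ` {..?N}. u w *\<^sub>R (v k *v w))"
        by (simp add: mv_sum_r matrix_vector_mult_scaleR)
      also have "\<dots> = (\<Sum>w\<in>X ` {..?N}. if w = X k then u (X k) *\<^sub>R (v k *v X k) else 0)"
        using ker k(1) by (intro sum.cong) auto
      also have "\<dots> = u (X k) *\<^sub>R (v k *v X k)" using k(1) by (simp add: sum.delta)
      finally show False using k nz by simp
    qed
    have "card (X ` {..?N}) \<le> DIM(real^'n)" using independent_bound[OF indep] by blast
    moreover have "card (X ` {..?N}) = ?N + 1" using card_image[OF inj] by simp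
    ultimately show False by simp
  qed
qed


definition dg :: "('n \<Rightarrow> real) \<Rightarrow> real^'n^'n" where
  "dg d = (\<chi> i j. if i = j then d i else 0)"

lemma dg_mv: "dg d *v x = (\<chi> i. d i * x$i)"
proof (subst vec_eq_iff, intro allI)
  fix i
  have "(dg d *v x) $ i = (\<Sum>j\<in>UNIV. (if i = j then d i else 0) * x$j)"
    by (simp add: dg_def matrix_vector_mult_def)
  also have "\<dots> = (\<Sum>j\<in>UNIV. if i = j then d i * x$j else 0)"
    by (rule sum.cong) auto
  also have "\<dots> = d i * x$i" by (simp add: sum.delta)
  finally show "(dg d *v x) $ i = (\<chi> i. d i * x$i) $ i" by simp
qed

lemma dg_PSD: "(\<And>k. 0 \<le> d k) \<Longrightarrow> dg d \<in> PSD"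
proof -
  assume d: "\<And>k. 0 \<le> d k"
  have "transpose (dg d) = dg d" by (auto simp: vec_eq_iff transpose_def dg_def)
  moreover have "0 \<le> x \<bullet> (dg d *v x)" for x
  proof -
    have "x \<bullet> (dg d *v x) = (\<Sum>i\<in>UNIV. d i * (x$i * x$i))"
      by (simp add: dg_mv inner_vec_def mult.left_commute)
    also have "\<dots> \<ge> 0" by (intro sum_nonneg) (simp add: d)
    finally show ?thesis .
  qed
  ultimately show ?thesis by (simp add: PSD_def)
qed

lemma dg_sum: "(\<Sum>i\<in>I. dg (f i)) = dg (\<lambda>k. \<Sum>i\<in>I. f i k)"
  by (simp add: vec_eq_iff dg_def sum_component if_distrib cong: if_cong)

lemma dg_not_Pos: "d k = 0 \<Longrightarrow> dg d \<notin> Pos"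
proof
  assume "d k = 0" "dg d \<in> Pos"
  hence "0 < axis k (1::real) \<bullet> (dg d *v axis k 1)" unfolding Pos_def
    by (metis (mono_tags, lifting) axis_eq_0_iff mem_Collect_eq zero_neq_one)
  moreover have "axis k (1::real) \<bullet> (dg d *v axis k 1) = d k"
  proof -
    have "dg d *v axis k 1 = d k *\<^sub>R axis k (1::real)"
      by (simp add: dg_mv vec_eq_iff axis_def)
    thus ?thesis by (simp add: inner_axis_axis)
  qed
  ultimately show False using \<open>d k = 0\<close> by simp
qed

lemma not_rank_prop:
  assumes N: "0 < N" "N < CARD('n)"
  shows "\<not> cone_rank_prop (Pos :: (real^'n^'n) set) N"
proof -
  obtain h :: "'n \<Rightarrow> nat" where h: "bij_betw h UNIV {0..<CARD('n)}"
    using ex_bij_betw_finite_nat[of "UNIV :: 'n set"] by auto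
  define g where "g k = min (h k) N" for k
  have gs: "\<exists>k. g k = i" if "i \<le> N" for i
  proof -
    have "i \<in> {0..<CARD('n)}" using that N by simp
    then obtain k where "h k = i" using h by (metis bij_betw_def imageE)
    thus ?thesis using that by (intro exI[of _ k]) (simp add: g_def)
  qed
  have gN: "g k \<le> N" for k by (simp add: g_def)
  define v where "v i = dg (\<lambda>k. if g k = i then 1 else 0)" for i
  have "\<forall>i\<le>N. v i \<in> closure Pos - {0}"
  proof (intro allI impI)
    fix i assume i: "i \<le> N"
    have "v i \<in> closure Pos" unfolding v_def using PSD_sub_closure by (intro subsetD[OF _ dg_PSD]) auto
    moreover have "v i \<noteq> 0"
    proof
      assume "v i = 0"
      obtain k where "g k = i" using gs[OF i] by (elim exE)
      hence "v i $ k $ k = 1" by (simp add: v_def dg_def)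
      thus False using \<open>v i = 0\<close> by simp
    qed
    ultimately show "v i \<in> closure Pos - {0}" by simp
  qed
  moreover have "(\<Sum>i\<le>N. v i) \<in> Pos"
  proof -
    have "(\<Sum>i\<le>N. v i) = dg (\<lambda>k. \<Sum>i\<le>N. if g k = i then 1 else 0)" unfolding v_def by (rule dg_sum)
    also have "\<dots> = mat 1" using gN by (simp add: dg_def mat_def vec_eq_iff sum.delta')
    finally have eq: "(\<Sum>i\<le>N. v i) = mat 1" .
    have "transpose (mat 1 :: real^'n^'n) = mat 1" by (simp add: transpose_def mat_def vec_eq_iff)
    thus ?thesis unfolding eq by (simp add: Pos_def)
  qed
  moreover have "\<not> (\<Sum>i\<in>{..N} - {j}. v i) \<in> Pos" if jN: "j \<le> N" for j
  proof -
    obtain k where k: "g k = j" using gs[OF jN] by (elim exE)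
    define D where "D = (\<lambda>k. \<Sum>i\<in>{..N} - {j}. if g k = i then 1 else (0::real))"
    have e: "(\<Sum>i\<in>{..N} - {j}. v i) = dg D"
      unfolding v_def D_def by (rule dg_sum)
    have "D k = 0" unfolding D_def using k by (intro sum.neutral) auto
    thus ?thesis unfolding e by (rule dg_not_Pos)
  qed
  ultimately show ?thesis unfolding cone_rank_prop_def by blast
qed

theorem propositionC2:
  shows "cone_rank (Pos :: (real^'n^'n) set) = enat CARD('n)"
  unfolding cone_rank_def
proof (rule antisym)
  show "(INF N \<in> {N::nat. 0 < N \<and> cone_rank_prop (Pos :: (real^'n^'n) set) N}. enat N) \<le> enat CARD('n)"
    by (rule INF_lower) (simp add: rank_prop_card)
  show "enat CARD('n) \<le> (INF N \<in> {N::nat. 0 < N \<and> cone_rank_prop (Pos :: (real^'n^'n) set) N}. enat N)"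
  proof (rule INF_greatest)
    fix N assume "N \<in> {N::nat. 0 < N \<and> cone_rank_prop (Pos :: (real^'n^'n) set) N}"
    thus "enat CARD('n) \<le> enat N" using not_rank_prop[of N] by (cases "N < CARD('n)") auto
  qed
qed

end
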